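(* For every $n\geq 1$ and every $w\in\{0,1\}^n$, there is a prenex first-order sentence over $\tau_{\mathsf{string}}$ with $3\lceil \log_3 n\rceil$ quantifiers, whose quantifier prefix consists of $\lceil\log_3 n\rceil$ consecutive blocks $\exists\exists\forall$, that is true in $\mathbf{B}_w$ and false in $\mathbf{B}_{w'}$ for every $w'\in\{0,1\}^n\setminus\{w\}$.
   Context: Vocabulary $\tau_{\mathsf{string}}=\langle <, S;\ \mathsf{min},\mathsf{max}\rangle$ with $<$ binary, $S$ unary, $\mathsf{min},\mathsf{max}$ constants. A string $w=w_1\cdots w_n\in\{0,1\}^n$ ($n\geq 1$) is encoded by the structure $\mathbf{B}_w$ with universe $\{1,\dots,n\}$, $<$ the usual order, $S=\{i: w_i=1\}$, $\mathsf{min}=1$, $\mathsf{max}=n$. The number of quantifiers is the number of quantifier occurrences. *)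

theory Defs
  imports Complex_Main
begin

datatype trm = Var nat | Min | Max

datatype fm =
    FTrue | FFalse
  | Less trm trm | Eq trm trm | S trm
  | Neg fm | And fm fm | Or fm fm
  | Ex nat fm | All nat fm

fun tvars :: "trm \<Rightarrow> nat set" where
  "tvars (Var x) = {x}" | "tvars Min = {}" | "tvars Max = {}"

fun free :: "fm \<Rightarrow> nat set" where
  "free FTrue = {}" | "free FFalse = {}"
| "free (Less a b) = tvars a \<union> tvars b"
| "free (Eq a b) = tvars a \<union> tvars b"
| "free (S a) = tvars a"
| "free (Neg p) = free p"
| "free (And p q) = free p \<union> free q"
| "free (Or p q) = free p \<union> free q"
| "free (Ex x p) = free p - {x}"
| "free (All x p) = free p - {x}"

fun qfree :: "fm \<Rightarrow> bool" where
  "qfree (Ex x p) = False" | "qfree (All x p) = False"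
| "qfree (Neg p) = qfree p"
| "qfree (And p q) = (qfree p \<and> qfree q)"
| "qfree (Or p q) = (qfree p \<and> qfree q)"
| "qfree _ = True"

fun nquant :: "fm \<Rightarrow> nat" where
  "nquant (Ex x p) = Suc (nquant p)" | "nquant (All x p) = Suc (nquant p)"
| "nquant (Neg p) = nquant p"
| "nquant (And p q) = nquant p + nquant q"
| "nquant (Or p q) = nquant p + nquant q"
| "nquant _ = 0"

text \<open>String w = w_1...w_n as a bool list (True = 1); structure B_w has universe {1..n},
  S = {i. w_i = 1}, min = 1, max = n.\<close>

fun teval :: "bool list \<Rightarrow> (nat \<Rightarrow> nat) \<Rightarrow> trm \<Rightarrow> nat" where
  "teval w v (Var x) = v x" | "teval w v Min = 1" | "teval w v Max = length w"

fun holds :: "bool list \<Rightarrow> (nat \<Rightarrow> nat) \<Rightarrow> fm \<Rightarrow> bool" where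
  "holds w v FTrue = True" | "holds w v FFalse = False"
| "holds w v (Less a b) = (teval w v a < teval w v b)"
| "holds w v (Eq a b) = (teval w v a = teval w v b)"
| "holds w v (S a) = (1 \<le> teval w v a \<and> teval w v a \<le> length w \<and> w ! (teval w v a - 1))"
| "holds w v (Neg p) = (\<not> holds w v p)"
| "holds w v (And p q) = (holds w v p \<and> holds w v q)"
| "holds w v (Or p q) = (holds w v p \<or> holds w v q)"
| "holds w v (Ex x p) = (\<exists>i\<in>{1..length w}. holds w (v(x := i)) p)"
| "holds w v (All x p) = (\<forall>i\<in>{1..length w}. holds w (v(x := i)) p)"

text \<open>Truth of a sentence in B_w (the assignment is irrelevant for sentences).\<close>
definition models :: "bool list \<Rightarrow> fm \<Rightarrow> bool" where
  "models w p = holds w (\<lambda>_. 1) p"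

definition sentence :: "fm \<Rightarrow> bool" where
  "sentence p \<longleftrightarrow> free p = {}"

fun add_prefix :: "(bool \<times> nat) list \<Rightarrow> fm \<Rightarrow> fm" where
  "add_prefix [] p = p"
| "add_prefix ((True, x) # qs) p = Ex x (add_prefix qs p)"
| "add_prefix ((False, x) # qs) p = All x (add_prefix qs p)"

definition prenex_with_prefix :: "bool list \<Rightarrow> fm \<Rightarrow> bool" where
  "prenex_with_prefix qk phi \<longleftrightarrow>
     (\<exists>qs m. qfree m \<and> map fst qs = qk \<and> phi = add_prefix qs m)"

end

theory Submission
  imports Defs
begin

definition imp :: "fm \<Rightarrow> fm \<Rightarrow> fm" where "imp p q = Or (Neg p) q"
definition lit :: "bool \<Rightarrow> trm \<Rightarrow> fm" where "lit c t = (if c then S t else Neg (S t))"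
definition btw :: "trm \<Rightarrow> trm \<Rightarrow> trm \<Rightarrow> fm" where "btw a z b = And (Less a z) (Less z b)"

fun conj :: "fm list \<Rightarrow> fm" where
  "conj [] = FTrue" | "conj (p # ps) = And p (conj ps)"

datatype cse = Cse fm trm trm "bool list"

fun guard :: "cse \<Rightarrow> fm" where "guard (Cse G a b u) = G"
fun cu :: "cse \<Rightarrow> bool list" where "cu (Cse G a b u) = u"
fun cvars :: "cse \<Rightarrow> nat set" where "cvars (Cse G a b u) = free G \<union> tvars a \<union> tvars b"

definition part :: "fm \<Rightarrow> fm \<Rightarrow> trm \<Rightarrow> trm \<Rightarrow> trm \<Rightarrow> bool list \<Rightarrow> fm \<times> cse list" where
  "part G R p q z ui = (if ui = [] then (imp G (Neg (btw p z q)), []) else (FTrue, [Cse (And G R) p q ui]))"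

fun step :: "nat \<Rightarrow> nat \<Rightarrow> cse \<Rightarrow> fm \<times> cse list" where
  "step m j (Cse G a b u) = (let x = Var (3*j); y = Var (3*j+1); z = Var (3*j+2) in
    if u = [] then (imp G (And (Less a b) (Neg (btw a z b))), [])
    else let l1 = min (length u - 2) m; l2 = min (length u - 2 - l1) m;
      rel = (if length u = 1 then Eq x y else Less x y);
      c2 = (if length u = 1 then u!0 else u!(l1+1+l2));
      p1 = part G (Neg (Less x z)) a x z (take l1 u);
      p2 = part G (And (Less x z) (Neg (Less y z))) x y z (take l2 (drop (l1+1) u));
      p3 = part G (Less y z) y b z (drop (l1+l2+2) u) in
      (And (imp G (And (Less a x) (And rel (And (Less y b) (And (lit (u!l1) x) (lit c2 y))))))
           (And (fst p1) (And (fst p2) (fst p3))), snd p1 @ snd p2 @ snd p3))"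

fun F :: "nat \<Rightarrow> cse list \<Rightarrow> fm \<Rightarrow> fm" where
  "F 0 cs acc = And acc (conj (map (\<lambda>c. Neg (guard c)) cs))"
| "F (Suc j) cs acc = Ex (3*j) (Ex (3*j+1) (All (3*j+2)
     (F j (concat (map (\<lambda>c. snd (step (3^j - 1) j c)) cs))
          (And acc (conj (map (\<lambda>c. fst (step (3^j - 1) j c)) cs))))))"

definition match :: "bool list \<Rightarrow> nat \<Rightarrow> nat \<Rightarrow> bool list \<Rightarrow> bool" where
  "match w p q u \<longleftrightarrow> p < q \<and> q \<le> length w \<and> q = p + length u + 1 \<and> (\<forall>i<length u. w!(p+i) = u!i)"

fun ok :: "bool list \<Rightarrow> (nat \<Rightarrow> nat) \<Rightarrow> cse \<Rightarrow> bool" where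
  "ok w v (Cse G a b u) = (holds w v G \<longrightarrow> match w (teval w v a) (teval w v b) u)"

lemma holds_imp[simp]: "holds w v (imp p q) = (holds w v p \<longrightarrow> holds w v q)" by (simp add: imp_def)
lemma holds_lit[simp]: "holds w v (lit c t) = ((1 \<le> teval w v t \<and> teval w v t \<le> length w \<and> w ! (teval w v t - 1)) = c)"
  by (simp add: lit_def)
lemma holds_btw[simp]: "holds w v (btw a z b) = (teval w v a < teval w v z \<and> teval w v z < teval w v b)"
  by (simp add: btw_def)
lemma holds_conj[simp]: "holds w v (conj ps) = (\<forall>p\<in>set ps. holds w v p)" by (induction ps) auto

lemma free_imp[simp]: "free (imp p q) = free p \<union> free q" by (simp add: imp_def)
lemma free_lit[simp]: "free (lit c t) = tvars t" by (simp add: lit_def)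
lemma free_btw[simp]: "free (btw a z b) = tvars a \<union> tvars z \<union> tvars b" by (auto simp: btw_def)
lemma free_conj[simp]: "free (conj ps) = (\<Union>p\<in>set ps. free p)" by (induction ps) auto
lemma qfree_imp[simp]: "qfree (imp p q) = (qfree p \<and> qfree q)" by (simp add: imp_def)
lemma qfree_lit[simp]: "qfree (lit c t)" by (simp add: lit_def)
lemma qfree_btw[simp]: "qfree (btw a z b)" by (simp add: btw_def)
lemma qfree_conj[simp]: "qfree (conj ps) = (\<forall>p\<in>set ps. qfree p)" by (induction ps) auto

lemma teval_cong: "(\<forall>x\<in>tvars t. v x = v' x) \<Longrightarrow> teval w v t = teval w v' t"
  by (cases t) auto

lemma holds_cong: "(\<forall>x\<in>free p. v x = v' x) \<Longrightarrow> holds w v p = holds w v' p"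
proof (induction p arbitrary: v v')
  case (Less a b) thus ?case using teval_cong[of a v v' w] teval_cong[of b v v' w] by auto
next
  case (Eq a b) thus ?case using teval_cong[of a v v' w] teval_cong[of b v v' w] by auto
next
  case (S a) thus ?case using teval_cong[of a v v' w] by auto
next
  case (And p q)
  have "holds w v p = holds w v' p" by (rule And.IH(1)) (use And.prems in auto)
  moreover have "holds w v q = holds w v' q" by (rule And.IH(2)) (use And.prems in auto)
  ultimately show ?case by simp
next
  case (Or p q)
  have "holds w v p = holds w v' p" by (rule Or.IH(1)) (use Or.prems in auto)
  moreover have "holds w v q = holds w v' q" by (rule Or.IH(2)) (use Or.prems in auto)
  ultimately show ?case by simp
next
  case (Ex x p)
  have "\<And>i. holds w (v(x:=i)) p = holds w (v'(x:=i)) p" by (rule Ex.IH) (use Ex.prems in auto)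
  thus ?case by simp
next
  case (All x p)
  have "\<And>i. holds w (v(x:=i)) p = holds w (v'(x:=i)) p" by (rule All.IH) (use All.prems in auto)
  thus ?case by simp
qed auto

lemma teval_range: "(\<forall>x. v x \<in> {1..length w}) \<Longrightarrow> length w \<ge> 1 \<Longrightarrow> teval w v t \<in> {1..length w}"
  by (cases t) auto

lemma step_qfree: "qfree (guard c) \<Longrightarrow> qfree (fst (step m j c)) \<and> (\<forall>c'\<in>set (snd (step m j c)). qfree (guard c'))"
  by (cases c) (auto simp: part_def Let_def)

lemma step_free: "free (fst (step m j c)) \<subseteq> cvars c \<union> {3*j,3*j+1,3*j+2}"
  "\<forall>c'\<in>set (snd (step m j c)). cvars c' \<subseteq> cvars c \<union> {3*j,3*j+1,3*j+2}"
  by (cases c; auto simp: part_def Let_def)+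

lemma F_prenex: "qfree acc \<Longrightarrow> (\<forall>c\<in>set cs. qfree (guard c)) \<Longrightarrow>
  \<exists>qs mt. qfree mt \<and> map fst qs = concat (replicate j [True,True,False]) \<and> F j cs acc = add_prefix qs mt"
proof (induction j arbitrary: cs acc)
  case 0
  then show ?case by (intro exI[of _ "[]"]) auto
next
  case (Suc j)
  let ?cs = "concat (map (\<lambda>c. snd (step (3^j - 1) j c)) cs)"
  let ?acc = "And acc (conj (map (\<lambda>c. fst (step (3^j - 1) j c)) cs))"
  have "qfree ?acc" "\<forall>c\<in>set ?cs. qfree (guard c)" using Suc.prems step_qfree by auto
  then obtain qs mt where "qfree mt" "map fst qs = concat (replicate j [True,True,False])" "F j ?cs ?acc = add_prefix qs mt"
    using Suc.IH by blast
  then show ?case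
    by (intro exI[of _ "(True,3*j)#(True,3*j+1)#(False,3*j+2)#qs"] exI[of _ mt]) auto
qed

lemma F_free: "free (F j cs acc) \<subseteq> free acc \<union> (\<Union>c\<in>set cs. cvars c)"
proof (induction j arbitrary: cs acc)
  case 0
  then show ?case by (auto, metis cvars.simps guard.simps cse.exhaust UnI1)
next
  case (Suc j)
  let ?cs = "concat (map (\<lambda>c. snd (step (3^j - 1) j c)) cs)"
  let ?acc = "And acc (conj (map (\<lambda>c. fst (step (3^j - 1) j c)) cs))"
  have "free (F j ?cs ?acc) \<subseteq> free ?acc \<union> (\<Union>c\<in>set ?cs. cvars c)" by (rule Suc.IH)
  also have "\<dots> \<subseteq> free acc \<union> (\<Union>c\<in>set cs. cvars c) \<union> {3*j,3*j+1,3*j+2}"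
    using step_free[of "3^j-1" j] by fastforce
  finally show ?case by auto
qed

lemma nquant_prefix: "qfree mt \<Longrightarrow> nquant (add_prefix qs mt) = length qs"
proof (induction qs)
  case Nil then show ?case by (induction mt) auto
next
  case (Cons q qs) then show ?case by (cases q; cases "fst q") auto
qed

lemma assemble:
  assumes "match w A X u1" "match w X Y u2" "match w Y B u3" "w!(X-1) = c1" "w!(Y-1) = c2"
  shows "match w A B (u1 @ [c1] @ u2 @ [c2] @ u3)"
  unfolding match_def
proof (intro conjI allI impI)
  have e: "X = A + length u1 + 1" "Y = X + length u2 + 1" "B = Y + length u3 + 1" "B \<le> length w"
    using assms unfolding match_def by auto
  then show "A < B" "B \<le> length w" "B = A + length (u1 @ [c1] @ u2 @ [c2] @ u3) + 1" by auto
  fix i assume i: "i < length (u1 @ [c1] @ u2 @ [c2] @ u3)"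
  consider "i < length u1" | "i = length u1" | "length u1 < i" "i < length u1 + 1 + length u2"
    | "i = length u1 + 1 + length u2" | "length u1 + 1 + length u2 < i" by linarith
  then show "w ! (A + i) = (u1 @ [c1] @ u2 @ [c2] @ u3) ! i"
  proof cases
    case 1 then show ?thesis using assms(1) by (auto simp: match_def nth_append)
  next
    case 2 then show ?thesis using assms(4) e by (auto simp: nth_append)
  next
    case 3
    then have "i - length u1 - 1 < length u2" by linarith
    then have "w ! (X + (i - length u1 - 1)) = u2 ! (i - length u1 - 1)" using assms(2) unfolding match_def by blast
    moreover have "X + (i - length u1 - 1) = A + i" using e 3 by auto
    ultimately show ?thesis using 3 by (auto simp: nth_append)
  next
    case 4 then show ?thesis using assms(5) e by (auto simp: nth_append add.assoc)
  next
    case 5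
    then have "i - length u1 - length u2 - 2 < length u3" using i by simp
    then have "w ! (Y + (i - length u1 - length u2 - 2)) = u3 ! (i - length u1 - length u2 - 2)"
      using assms(3) unfolding match_def by blast
    moreover have "Y + (i - length u1 - length u2 - 2) = A + i" using e 5 by auto
    ultimately show ?thesis using 5 by (auto simp: nth_append)
  qed
qed

lemma disassemble:
  assumes "match w A B (u1 @ [c1] @ u2 @ [c2] @ u3)" "X = A + length u1 + 1" "Y = X + length u2 + 1"
  shows "match w A X u1" "match w X Y u2" "match w Y B u3" "w!(X-1) = c1" "w!(Y-1) = c2"
proof -
  have B: "B = A + length u1 + length u2 + length u3 + 3" "B \<le> length w" and
    c: "\<And>i. i < length (u1 @ [c1] @ u2 @ [c2] @ u3) \<Longrightarrow> w!(A+i) = (u1 @ [c1] @ u2 @ [c2] @ u3)!i"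
    using assms(1) unfolding match_def by auto
  show "match w A X u1" unfolding match_def using B assms(2) c[of i for i] by (auto simp: nth_append)
  show "w!(X-1) = c1" using c[of "length u1"] assms(2) by (auto simp: nth_append)
  show "match w X Y u2" unfolding match_def
  proof (intro conjI allI impI)
    fix i assume "i < length u2"
    then show "w ! (X + i) = u2 ! i" using c[of "length u1 + 1 + i"] assms(2) by (auto simp: nth_append add.assoc)
  qed (use B assms in auto)
  have "(u1 @ [c1] @ u2 @ [c2] @ u3) ! (length u1 + 1 + length u2) = c2" by (simp add: nth_append)
  moreover have "A + (length u1 + 1 + length u2) = Y - 1" using assms(2,3) by simp
  ultimately show "w!(Y-1) = c2" using c[of "length u1 + 1 + length u2"] by simp
  show "match w Y B u3" unfolding match_def
  proof (intro conjI allI impI)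
    fix i assume "i < length u3"
    then show "w ! (Y + i) = u3 ! i" using c[of "length u1 + length u2 + 2 + i"] assms(2,3) by (auto simp: nth_append add.assoc)
  qed (use B assms in auto)
qed

lemma part_sound:
  assumes H: "\<forall>Z\<in>{1..length w}. holds w (V Z) (fst (part G R p q z ui)) \<and> (\<forall>c'\<in>set (snd (part G R p q z ui)). ok w (V Z) c')"
    and P: "\<And>Z. teval w (V Z) p = P" and Q: "\<And>Z. teval w (V Z) q = Q" and Zz: "\<And>Z. teval w (V Z) z = Z"
    and G: "\<And>Z. holds w (V Z) G" and Z0: "Z0 \<in> {1..length w}" "holds w (V Z0) R"
    and PQ: "P < Q" "Q \<le> length w"
  shows "match w P Q ui"
proof (cases "ui = []")
  case True
  have "Q = P + 1"
  proof (rule ccontr)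
    assume "Q \<noteq> P + 1"
    then have "P + 1 \<in> {1..length w}" "P < P + 1" "P + 1 < Q" using PQ by auto
    then show False using H[rule_format, of "P+1"] True P Q Zz G by (auto simp: part_def)
  qed
  then show ?thesis using True PQ by (simp add: match_def)
next
  case False
  then show ?thesis using H[rule_format, OF Z0(1)] Z0(2) G P Q by (auto simp: part_def)
qed

lemma step_sound:
  assumes rng: "\<forall>x. v x \<in> {1..length w}"
    and XY: "X \<in> {1..length w}" "Y \<in> {1..length w}"
    and fresh: "cvars c \<inter> {3*j,3*j+1,3*j+2} = {}"
    and H: "\<forall>Z\<in>{1..length w}. holds w (v(3*j:=X, 3*j+1:=Y, 3*j+2:=Z)) (fst (step m j c)) \<and>
              (\<forall>c'\<in>set (snd (step m j c)). ok w (v(3*j:=X, 3*j+1:=Y, 3*j+2:=Z)) c')"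
  shows "ok w v c"
proof (cases c)
  case (Cse G a b u)
  define V where "V Z = v(3*j:=X, 3*j+1:=Y, 3*j+2:=Z)" for Z
  define n where "n = length w"
  have n1: "n \<ge> 1" using XY n_def by auto
  have H': "\<forall>Z\<in>{1..n}. holds w (V Z) (fst (step m j c)) \<and> (\<forall>c'\<in>set (snd (step m j c)). ok w (V Z) c')"
    using H by (simp add: V_def n_def)
  have ta: "teval w (V Z) a = teval w v a" for Z
    by (rule teval_cong) (use fresh Cse in \<open>auto simp: V_def\<close>)
  have tb: "teval w (V Z) b = teval w v b" for Z
    by (rule teval_cong) (use fresh Cse in \<open>auto simp: V_def\<close>)
  have hG: "holds w (V Z) G = holds w v G" for Z
    by (rule holds_cong) (use fresh Cse in \<open>auto simp: V_def\<close>)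
  have tx: "teval w (V Z) (Var (3*j)) = X" "teval w (V Z) (Var (3*j+1)) = Y" "teval w (V Z) (Var (3*j+2)) = Z" for Z
    by (auto simp: V_def)
  show ?thesis
  proof (unfold Cse ok.simps, intro impI)
    assume hg: "holds w v G"
    define A where "A = teval w v a"
    define B where "B = teval w v b"
    have AB: "A \<in> {1..n}" "B \<in> {1..n}" using teval_range rng n1 by (auto simp: A_def B_def n_def)
    show "match w A B u"
    proof (cases "u = []")
      case True
      have h: "A < B \<and> \<not> (A < Z \<and> Z < B)" if "Z \<in> {1..n}" for Z
        using H'[rule_format, OF that] True Cse hG hg ta tb tx by (simp add: A_def B_def btw_def Let_def)
      have "B = A + 1"
      proof (rule ccontr)
        assume "B \<noteq> A + 1"
        then show False using h[of 1] h[of "A+1"] AB by auto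
      qed
      then show ?thesis using True AB by (simp add: match_def n_def)
    next
      case False
      define x where "x = Var (3*j)"
      define y where "y = Var (3*j+1)"
      define z where "z = Var (3*j+2)"
      define l1 where "l1 = min (length u - 2) m"
      define l2 where "l2 = min (length u - 2 - l1) m"
      define rel where "rel = (if length u = 1 then Eq x y else Less x y)"
      define c2 where "c2 = (if length u = 1 then u!0 else u!(l1+1+l2))"
      define P1 where "P1 = part G (Neg (Less x z)) a x z (take l1 u)"
      define P2 where "P2 = part G (And (Less x z) (Neg (Less y z))) x y z (take l2 (drop (l1+1) u))"
      define P3 where "P3 = part G (Less y z) y b z (drop (l1+l2+2) u)"
      have st: "fst (step m j c) = And (imp G (And (Less a x) (And rel (And (Less y b) (And (lit (u!l1) x) (lit c2 y))))))
           (And (fst P1) (And (fst P2) (fst P3)))" "snd (step m j c) = snd P1 @ snd P2 @ snd P3"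
        using False by (simp_all add: Cse Let_def x_def y_def z_def l1_def l2_def rel_def c2_def P1_def P2_def P3_def)
      have HP: "\<forall>Z\<in>{1..length w}. holds w (V Z) (fst P) \<and> (\<forall>c'\<in>set (snd P). ok w (V Z) c')"
        if "P \<in> {P1,P2,P3}" for P using H' that unfolding st n_def by auto
      have tx': "\<And>Z. teval w (V Z) x = X" "\<And>Z. teval w (V Z) y = Y" "\<And>Z. teval w (V Z) z = Z"
        using tx by (auto simp: x_def y_def z_def)
      have mainf: "A < X \<and> holds w (V 1) rel \<and> Y < B \<and> (w!(X-1) = u!l1) \<and> (w!(Y-1) = c2)"
        using H'[rule_format, of 1] n1 hG hg ta tb tx' XY unfolding st by (auto simp: A_def B_def n_def)
      have m1: "match w A X (take l1 u)"
        by (rule part_sound[OF HP[of P1, OF insertI1, unfolded P1_def], of A X 1])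
          (use tx' ta hG hg mainf XY n1 in \<open>auto simp: P1_def A_def n_def\<close>)
      have m3: "match w Y B (drop (l1+l2+2) u)"
        by (rule part_sound[OF HP[of P3, OF insertI2[OF insertI2[OF insertI1]], unfolded P3_def], of Y B n])
          (use tx' tb hG hg mainf AB n1 in \<open>auto simp: P3_def B_def n_def\<close>)
      show ?thesis
      proof (cases "length u = 1")
        case True
        then have "X = Y" using mainf by (simp add: rel_def tx')
        moreover have "l1 = 0" "l2 = 0" using True by (auto simp: l1_def l2_def)
        ultimately show ?thesis using m1 m3 mainf True by (auto simp: match_def)
      next
        case len: False
        then have len2: "length u \<ge> 2" using False by (cases u) (auto simp: Suc_le_eq)
        have XY': "X < Y" using mainf len by (simp add: rel_def tx')
        have m2: "match w X Y (take l2 (drop (l1+1) u))"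
          by (rule part_sound[OF HP[of P2, OF insertI2[OF insertI1], unfolded P2_def], of X Y Y])
            (use tx' hG hg mainf XY XY' AB in \<open>auto simp: P2_def n_def\<close>)
        have l12: "l1 + l2 + 2 \<le> length u" using len2 by (auto simp: l1_def l2_def)
        have u: "u = take l1 u @ [u!l1] @ take l2 (drop (l1+1) u) @ [u!(l1+1+l2)] @ drop (l1+l2+2) u"
        proof -
          have d1: "drop l1 u = u!l1 # drop (Suc l1) u" using l12 by (simp add: Cons_nth_drop_Suc)
          have d2: "drop (Suc l1) u = take l2 (drop (l1+1) u) @ drop (l1+1+l2) u"
            by (metis Suc_eq_plus1 append_take_drop_id drop_drop add.commute)
          have lt: "l1+1+l2 < length u" using l12 by simp
          have e2: "l1+l2+2 = Suc (l1+1+l2)" by simp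
          have d3: "drop (l1+1+l2) u = u!(l1+1+l2) # drop (l1+l2+2) u"
            unfolding e2 using lt by (simp add: Cons_nth_drop_Suc)
          have "u = take l1 u @ drop l1 u" by simp
          then show ?thesis by (simp only: d1 d2 d3 append_Cons append_Nil)
        qed
        show ?thesis
          by (subst u, rule assemble[OF m1 m2 m3]) (use mainf len in \<open>auto simp: c2_def\<close>)
      qed
    qed
  qed
qed

lemma ok_guard: "\<not> holds w v (guard c) \<Longrightarrow> ok w v c" by (cases c) auto

lemma F_sound:
  "\<forall>x. v x \<in> {1..length w} \<Longrightarrow> length w \<ge> 1 \<Longrightarrow> (\<forall>c\<in>set cs. \<forall>x\<in>cvars c. x \<ge> 3*j) \<Longrightarrow>
   (\<forall>x\<in>free acc. x \<ge> 3*j) \<Longrightarrow> holds w v (F j cs acc) \<Longrightarrow> holds w v acc \<and> (\<forall>c\<in>set cs. ok w v c)"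
proof (induction j arbitrary: cs acc v)
  case 0
  then show ?case using ok_guard by auto
next
  case (Suc j)
  let ?cs = "concat (map (\<lambda>c. snd (step (3^j - 1) j c)) cs)"
  let ?acc = "And acc (conj (map (\<lambda>c. fst (step (3^j - 1) j c)) cs))"
  define V where "V X Y Z = v(3*j:=X, 3*j+1:=Y, 3*j+2:=Z)" for X Y Z
  obtain X Y where XY: "X \<in> {1..length w}" "Y \<in> {1..length w}"
    and H: "\<forall>Z\<in>{1..length w}. holds w (V X Y Z) (F j ?cs ?acc)"
    using Suc.prems(5) by (auto simp: V_def)
  have fr1: "\<forall>c\<in>set ?cs. \<forall>x\<in>cvars c. x \<ge> 3*j"
  proof (intro ballI)
    fix c' x assume "c' \<in> set ?cs" "x \<in> cvars c'"
    then obtain c where "c \<in> set cs" "c' \<in> set (snd (step (3^j - 1) j c))" by auto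
    then show "x \<ge> 3*j" using step_free(2)[of "3^j-1" j c] Suc.prems(3) \<open>x \<in> cvars c'\<close> by fastforce
  qed
  have fr2: "\<forall>x\<in>free ?acc. x \<ge> 3*j"
    using step_free(1)[of "3^j-1" j] Suc.prems(3,4) by fastforce
  have IH: "holds w (V X Y Z) ?acc \<and> (\<forall>c\<in>set ?cs. ok w (V X Y Z) c)" if "Z \<in> {1..length w}" for Z
    by (rule Suc.IH[OF _ Suc.prems(2) fr1 fr2 H[rule_format, OF that]])
      (use Suc.prems(1) XY that in \<open>auto simp: V_def\<close>)
  have accV: "holds w (V X Y Z) acc = holds w v acc" for Z
    by (rule holds_cong) (use Suc.prems(4) in \<open>auto simp: V_def\<close>)
  have "holds w v acc" using IH[of 1] accV Suc.prems(2) by auto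
  moreover have "ok w v c" if c: "c \<in> set cs" for c
  proof (rule step_sound[OF Suc.prems(1) XY, of c j "3^j - 1"])
    show "cvars c \<inter> {3*j,3*j+1,3*j+2} = {}" using Suc.prems(3) c by fastforce
    show "\<forall>Z\<in>{1..length w}. holds w (v(3*j:=X, 3*j+1:=Y, 3*j+2:=Z)) (fst (step (3^j-1) j c)) \<and>
              (\<forall>c'\<in>set (snd (step (3^j-1) j c)). ok w (v(3*j:=X, 3*j+1:=Y, 3*j+2:=Z)) c')"
      using IH c by (auto simp: V_def)
  qed
  ultimately show ?case by blast
qed

fun chXY :: "nat \<Rightarrow> bool list \<Rightarrow> (nat \<Rightarrow> nat) \<Rightarrow> cse \<Rightarrow> nat \<times> nat" where
  "chXY m w v (Cse G a b u) = (let A = teval w v a; l1 = min (length u - 2) m; l2 = min (length u - 2 - l1) m in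
    if u = [] then (1,1) else if length u = 1 then (A+1, A+1) else (A+l1+1, A+l1+l2+2))"

lemma part_children: "c' \<in> set (snd (part G R p q z ui)) \<Longrightarrow> c' = Cse (And G R) p q ui \<and> ui \<noteq> []"
  by (auto simp: part_def split: if_splits)

lemma part_complete:
  assumes "match w P Q ui" "teval w V p = P" "teval w V q = Q" "teval w V z = Z"
  shows "holds w V (fst (part G R p q z ui)) \<and> (\<forall>c'\<in>set (snd (part G R p q z ui)). ok w V c')"
  using assms by (auto simp: part_def match_def)

lemma decomp:
  assumes l12: "l1 + l2 + 2 \<le> length u"
  shows "u = take l1 u @ [u!l1] @ take l2 (drop (l1+1) u) @ [u!(l1+1+l2)] @ drop (l1+l2+2) u"
proof -
  have d1: "drop l1 u = u!l1 # drop (Suc l1) u" using l12 by (simp add: Cons_nth_drop_Suc)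
  have d2: "drop (Suc l1) u = take l2 (drop (l1+1) u) @ drop (l1+1+l2) u"
    by (metis Suc_eq_plus1 append_take_drop_id drop_drop add.commute)
  have lt: "l1+1+l2 < length u" using l12 by simp
  have e2: "l1+l2+2 = Suc (l1+1+l2)" by simp
  have d3: "drop (l1+1+l2) u = u!(l1+1+l2) # drop (l1+l2+2) u"
    unfolding e2 using lt by (simp add: Cons_nth_drop_Suc)
  have "u = take l1 u @ drop l1 u" by simp
  then show ?thesis by (simp only: d1 d2 d3 append_Cons append_Nil)
qed

lemma step_complete:
  assumes rng: "\<forall>x. v x \<in> {1..length w}" and n1: "length w \<ge> 1"
    and fresh: "cvars c \<inter> {3*j,3*j+1,3*j+2} = {}"
    and okc: "ok w v c" and sz: "length (cu c) \<le> 3*m+2"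
    and gx: "holds w v (guard c) \<Longrightarrow> (X,Y) = chXY m w v c"
    and V_def: "V = v(3*j:=X, 3*j+1:=Y, 3*j+2:=Z)"
  shows "holds w V (fst (step m j c)) \<and>
    (\<forall>c'\<in>set (snd (step m j c)). ok w V c' \<and> length (cu c') \<le> m \<and> cu c' \<noteq> [] \<and>
        (holds w V (guard c') \<longrightarrow> holds w v (guard c))) \<and>
    (\<forall>c'\<in>set (snd (step m j c)). \<forall>c''\<in>set (snd (step m j c)).
        holds w V (guard c') \<longrightarrow> holds w V (guard c'') \<longrightarrow> c' = c'')"
proof (cases c)
  case (Cse G a b u)
  define n where "n = length w"
  have ta: "teval w V a = teval w v a"
    by (rule teval_cong) (use fresh Cse in \<open>auto simp: V_def\<close>)
  have tb: "teval w V b = teval w v b"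
    by (rule teval_cong) (use fresh Cse in \<open>auto simp: V_def\<close>)
  have hG: "holds w V G = holds w v G"
    by (rule holds_cong) (use fresh Cse in \<open>auto simp: V_def\<close>)
  define A where "A = teval w v a"
  define B where "B = teval w v b"
  have mt: "holds w v G \<Longrightarrow> match w A B u" using okc Cse by (simp add: A_def B_def)
  show ?thesis
  proof (cases "u = []")
    case True
    then show ?thesis using mt hG ta tb Cse by (auto simp: Let_def match_def A_def B_def)
  next
    case False
    define x where "x = Var (3*j)"
    define y where "y = Var (3*j+1)"
    define z where "z = Var (3*j+2)"
    have tx': "teval w V x = X" "teval w V y = Y" "teval w V z = Z"
      by (auto simp: V_def x_def y_def z_def)
    define l1 where "l1 = min (length u - 2) m"
    define l2 where "l2 = min (length u - 2 - l1) m"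
    define rel where "rel = (if length u = 1 then Eq x y else Less x y)"
    define c2 where "c2 = (if length u = 1 then u!0 else u!(l1+1+l2))"
    define R1 where "R1 = Neg (Less x z)"
    define R2 where "R2 = And (Less x z) (Neg (Less y z))"
    define R3 where "R3 = Less y z"
    define P1 where "P1 = part G R1 a x z (take l1 u)"
    define P2 where "P2 = part G R2 x y z (take l2 (drop (l1+1) u))"
    define P3 where "P3 = part G R3 y b z (drop (l1+l2+2) u)"
    have st: "fst (step m j c) = And (imp G (And (Less a x) (And rel (And (Less y b) (And (lit (u!l1) x) (lit c2 y))))))
         (And (fst P1) (And (fst P2) (fst P3)))" "snd (step m j c) = snd P1 @ snd P2 @ snd P3"
      using False by (simp_all add: Cse Let_def x_def y_def z_def l1_def l2_def rel_def c2_def P1_def P2_def P3_def R1_def R2_def R3_def)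
    have uc: "length u \<le> 3*m+2" using sz Cse by simp
    have sizes: "length (take l1 u) \<le> m" "length (take l2 (drop (l1+1) u)) \<le> m" "length (drop (l1+l2+2) u) \<le> m"
      using uc by (auto simp: l1_def l2_def)
    have ch: "c' = Cse (And G R1) a x (take l1 u) \<and> take l1 u \<noteq> [] \<or>
              c' = Cse (And G R2) x y (take l2 (drop (l1+1) u)) \<and> take l2 (drop (l1+1) u) \<noteq> [] \<or>
              c' = Cse (And G R3) y b (drop (l1+l2+2) u) \<and> drop (l1+l2+2) u \<noteq> []"
      if "c' \<in> set (snd (step m j c))" for c'
      using that unfolding st P1_def P2_def P3_def by (auto dest: part_children)
    show ?thesis
    proof (cases "holds w v G")
      case False
      have "holds w V (fst P)" if "P \<in> {P1,P2,P3}" for P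
        using that False hG by (auto simp: P1_def P2_def P3_def part_def)
      then have f: "holds w V (fst (step m j c))" using False hG unfolding st by auto
      show ?thesis using f ch sizes False hG ok_guard by (metis guard.simps holds.simps(7) cu.simps)
    next
      case True
      have m: "match w A B u" using mt True by simp
      have AB: "A \<in> {1..n}" "B \<in> {1..n}" using teval_range rng n1 by (auto simp: A_def B_def n_def)
      have XYv: "(X,Y) = chXY m w v c" using gx True Cse by simp
      have main: "A < X \<and> X \<le> Y \<and> Y < B \<and> holds w V (fst (step m j c)) \<and>
          (\<forall>c'\<in>set (snd (step m j c)). ok w V c')"
      proof (cases "length u = 1")
        case len1: True
        have XY: "X = A + 1" "Y = A + 1" using XYv len1 Cse by (cases u; auto simp: Let_def A_def)+
        have l0: "l1 = 0" "l2 = 0" using len1 by (auto simp: l1_def l2_def)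
        have B2: "B = A + 2" "w!A = u!0" using m len1 by (auto simp: match_def)
        have e: "take l1 u = []" "take l2 (drop (l1+1) u) = []" "drop (l1+l2+2) u = []" using l0 len1 by auto
        have p1: "holds w V (fst P1)" unfolding P1_def e(1) using part_complete[of w A "A+1" "[]" V a x z Z G R1] B2 AB tx' ta XY
          by (simp add: match_def A_def n_def)
        have p3: "holds w V (fst P3)" unfolding P3_def e(3) using part_complete[of w "A+1" B "[]" V y b z Z G R3] B2 AB tx' tb XY
          by (simp add: match_def B_def n_def)
        have p2: "holds w V (fst P2)" using e tx' XY by (simp add: P2_def part_def)
        have "holds w V (imp G (And (Less a x) (And rel (And (Less y b) (And (lit (u!l1) x) (lit c2 y))))))"
          using tx' ta tb XY B2 AB l0 len1 by (simp add: rel_def c2_def A_def B_def n_def)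
        moreover have "snd P1 = []" "snd P2 = []" "snd P3 = []" using e by (simp_all add: P1_def P2_def P3_def part_def)
        ultimately show ?thesis using p1 p2 p3 XY B2 unfolding st by simp
      next
        case len: False
        then have len2: "length u \<ge> 2" using False by (cases u) (auto simp: Suc_le_eq)
        have l12: "l1 + l2 + 2 \<le> length u" using len2 by (auto simp: l1_def l2_def)
        have XY: "X = A + l1 + 1" "Y = A + l1 + l2 + 2" using XYv len len2 False Cse
          by (auto simp: Let_def A_def l1_def l2_def)
        have lens: "length (take l1 u) = l1" "length (take l2 (drop (l1+1) u)) = l2" using l12 by auto
        have m': "match w A B (take l1 u @ [u!l1] @ take l2 (drop (l1+1) u) @ [u!(l1+1+l2)] @ drop (l1+l2+2) u)"
          using m decomp[OF l12] by simp
        note d = disassemble[OF m', of X Y]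
        have dX: "X = A + length (take l1 u) + 1" "Y = X + length (take l2 (drop (l1+1) u)) + 1"
          using XY lens by auto
        note dd = d[OF dX]
        have ord: "A < X" "X < Y" "Y < B" "B \<le> n" using dd(1,2,3) by (auto simp: match_def n_def)
        have p1: "holds w V (fst P1) \<and> (\<forall>c'\<in>set (snd P1). ok w V c')" using part_complete[OF dd(1), of V a x z Z G R1] tx' ta
          by (simp add: P1_def A_def)
        have p2: "holds w V (fst P2) \<and> (\<forall>c'\<in>set (snd P2). ok w V c')" using part_complete[OF dd(2), of V x y z Z G R2] tx'
          by (simp add: P2_def)
        have p3: "holds w V (fst P3) \<and> (\<forall>c'\<in>set (snd P3). ok w V c')" using part_complete[OF dd(3), of V y b z Z G R3] tx' tb
          by (simp add: P3_def B_def)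
        have "holds w V (imp G (And (Less a x) (And rel (And (Less y b) (And (lit (u!l1) x) (lit c2 y))))))"
          using tx' ta tb ord dd(4,5) AB len by (simp add: rel_def c2_def A_def B_def n_def)
        then show ?thesis using p1 p2 p3 ord unfolding st by auto
      qed
      have hGV: "holds w V G" using True hG by simp
      have excl: "c' = c''" if "c' \<in> set (snd (step m j c))" "c'' \<in> set (snd (step m j c))"
        "holds w V (guard c')" "holds w V (guard c'')" for c' c''
        using ch[OF that(1)] ch[OF that(2)] that(3,4) main tx'
        by (auto simp: R1_def R2_def R3_def)
      have f1: "holds w V (fst (step m j c))" using main by blast
      have f2: "\<forall>c'\<in>set (snd (step m j c)). ok w V c' \<and> length (cu c') \<le> m \<and> cu c' \<noteq> [] \<and>
        (holds w V (guard c') \<longrightarrow> holds w v (guard c))"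
      proof
        fix c' assume c': "c' \<in> set (snd (step m j c))"
        have "ok w V c'" using main c' by blast
        moreover have "length (cu c') \<le> m" using ch[OF c'] sizes by auto
        moreover have "cu c' \<noteq> []" using ch[OF c'] by auto
        moreover have "holds w v (guard c)" using True Cse by simp
        ultimately show "ok w V c' \<and> length (cu c') \<le> m \<and> cu c' \<noteq> [] \<and>
          (holds w V (guard c') \<longrightarrow> holds w v (guard c))" by blast
      qed
      show ?thesis using f1 f2 excl by blast
    qed
  qed
qed

lemma chXY_range:
  assumes rng: "\<forall>x. v x \<in> {1..length w}" and n1: "length w \<ge> 1"
    and okc: "ok w v c" and g: "holds w v (guard c)" and sz: "length (cu c) \<le> 3*m+2"
  shows "fst (chXY m w v c) \<in> {1..length w} \<and> snd (chXY m w v c) \<in> {1..length w}"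
proof (cases c)
  case (Cse G a b u)
  have m: "match w (teval w v a) (teval w v b) u" using okc g Cse by simp
  have l12: "length u \<ge> 2 \<Longrightarrow> min (length u - 2) m + min (length u - 2 - min (length u - 2) m) m + 2 \<le> length u"
    by auto
  show ?thesis
  proof (cases "length u \<ge> 2")
    case True
    then show ?thesis using m n1 l12 Cse by (auto simp: Let_def match_def)
  next
    case False
    then have "length u = 0 \<or> length u = 1" by arith
    then show ?thesis using m n1 Cse by (auto simp: Let_def match_def)
  qed
qed

lemma F_complete:
  "\<forall>x. v x \<in> {1..length w} \<Longrightarrow> length w \<ge> 1 \<Longrightarrow> (\<forall>c\<in>set cs. \<forall>x\<in>cvars c. x \<ge> 3*j) \<Longrightarrow>
   (\<forall>x\<in>free acc. x \<ge> 3*j) \<Longrightarrow> holds w v acc \<Longrightarrow>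
   (\<forall>c\<in>set cs. ok w v c \<and> length (cu c) < 3^j \<and> (cu c = [] \<longrightarrow> 0 < j)) \<Longrightarrow>
   (\<forall>c\<in>set cs. \<forall>c'\<in>set cs. holds w v (guard c) \<longrightarrow> holds w v (guard c') \<longrightarrow> c = c') \<Longrightarrow>
   holds w v (F j cs acc)"
proof (induction j arbitrary: cs acc v)
  case 0
  then have "cs = []" by (metis length_0_conv less_one list.set_intros(1) neq_Nil_conv power_0 less_irrefl)
  then show ?case using 0 by simp
next
  case (Suc j)
  define m where "m = 3^j - (1::nat)"
  have m3: "3^Suc j = 3*m + 3" using m_def by (simp add: algebra_simps)
  let ?cs = "concat (map (\<lambda>c. snd (step m j c)) cs)"
  let ?acc = "And acc (conj (map (\<lambda>c. fst (step m j c)) cs))"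
  define c0 where "c0 = (SOME c. c \<in> set cs \<and> holds w v (guard c))"
  define XY where "XY = (if \<exists>c\<in>set cs. holds w v (guard c) then chXY m w v c0 else (1,1))"
  define X where "X = fst XY"
  define Y where "Y = snd XY"
  have szc: "length (cu c) \<le> 3*m+2" if "c \<in> set cs" for c using Suc.prems(6) that m3 by fastforce
  have gx: "(X,Y) = chXY m w v c" if "c \<in> set cs" "holds w v (guard c)" for c
  proof -
    have ex: "\<exists>c\<in>set cs. holds w v (guard c)" using that by blast
    then have "c0 \<in> set cs \<and> holds w v (guard c0)" unfolding c0_def by (metis (mono_tags, lifting) someI_ex)
    then have "c0 = c" using Suc.prems(7) that by blast
    then show ?thesis using ex by (simp add: X_def Y_def XY_def)
  qed
  have XYr: "X \<in> {1..length w}" "Y \<in> {1..length w}"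
  proof -
    have "X \<in> {1..length w} \<and> Y \<in> {1..length w}"
    proof (cases "\<exists>c\<in>set cs. holds w v (guard c)")
      case True
      then obtain c where c: "c \<in> set cs" "holds w v (guard c)" by blast
      show ?thesis using chXY_range[OF Suc.prems(1,2) _ c(2) szc[OF c(1)]] gx[OF c] Suc.prems(6) c(1)
        by (metis fst_conv snd_conv)
    next
      case False
      then show ?thesis using Suc.prems(2) by (simp add: X_def Y_def XY_def)
    qed
    then show "X \<in> {1..length w}" "Y \<in> {1..length w}" by auto
  qed
  have all: "holds w (v(3*j:=X, 3*j+1:=Y, 3*j+2:=Z)) (F j ?cs ?acc)" if Z: "Z \<in> {1..length w}" for Z
  proof -
    define V where "V = v(3*j:=X, 3*j+1:=Y, 3*j+2:=Z)"
    have sc: "holds w V (fst (step m j c)) \<and>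
      (\<forall>c'\<in>set (snd (step m j c)). ok w V c' \<and> length (cu c') \<le> m \<and> cu c' \<noteq> [] \<and>
        (holds w V (guard c') \<longrightarrow> holds w v (guard c))) \<and>
      (\<forall>c'\<in>set (snd (step m j c)). \<forall>c''\<in>set (snd (step m j c)).
        holds w V (guard c') \<longrightarrow> holds w V (guard c'') \<longrightarrow> c' = c'')" if c: "c \<in> set cs" for c
      by (rule step_complete[OF Suc.prems(1,2) _ _ szc[OF c] gx[OF c] V_def])
        (use Suc.prems(3,6) c in fastforce)+
    have fr1: "\<forall>c\<in>set ?cs. \<forall>x\<in>cvars c. x \<ge> 3*j"
    proof (intro ballI)
      fix c' x assume "c' \<in> set ?cs" "x \<in> cvars c'"
      then obtain c where "c \<in> set cs" "c' \<in> set (snd (step m j c))" by auto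
      then show "x \<ge> 3*j" using step_free(2)[of m j c] Suc.prems(3) \<open>x \<in> cvars c'\<close> by fastforce
    qed
    have fr2: "\<forall>x\<in>free ?acc. x \<ge> 3*j"
      using step_free(1)[of m j] Suc.prems(3,4) by fastforce
    have accV: "holds w V acc = holds w v acc"
      by (rule holds_cong) (use Suc.prems(4) in \<open>auto simp: V_def\<close>)
    have hacc: "holds w V ?acc" using accV Suc.prems(5) sc by auto
    have hcs: "\<forall>c\<in>set ?cs. ok w V c \<and> length (cu c) < 3^j \<and> (cu c = [] \<longrightarrow> 0 < j)"
    proof
      fix c' assume "c' \<in> set ?cs"
      then obtain c where "c \<in> set cs" "c' \<in> set (snd (step m j c))" by auto
      then show "ok w V c' \<and> length (cu c') < 3^j \<and> (cu c' = [] \<longrightarrow> 0 < j)"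
        using sc m_def by (metis One_nat_def Suc_pred le_imp_less_Suc zero_less_numeral zero_less_power)
    qed
    have hex: "\<forall>c\<in>set ?cs. \<forall>c'\<in>set ?cs. holds w V (guard c) \<longrightarrow> holds w V (guard c') \<longrightarrow> c = c'"
    proof (intro ballI impI)
      fix c' c'' assume a: "c' \<in> set ?cs" "c'' \<in> set ?cs" "holds w V (guard c')" "holds w V (guard c'')"
      then obtain d1 d2 where d: "d1 \<in> set cs" "c' \<in> set (snd (step m j d1))" "d2 \<in> set cs" "c'' \<in> set (snd (step m j d2))"
        by auto
      have "holds w v (guard d1)" "holds w v (guard d2)" using sc[OF d(1)] sc[OF d(3)] d a by blast+
      then have "d1 = d2" using Suc.prems(7) d by blast
      then show "c' = c''" using sc[OF d(1)] d a by blast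
    qed
    show ?thesis unfolding V_def[symmetric]
      by (rule Suc.IH[OF _ Suc.prems(2) fr1 fr2 hacc hcs hex]) (use Suc.prems(1) XYr Z in \<open>auto simp: V_def\<close>)
  qed
  have "\<exists>X\<in>{1..length w}. \<exists>Y\<in>{1..length w}. \<forall>Z\<in>{1..length w}. holds w (v(3*j:=X,3*j+1:=Y,3*j+2:=Z)) (F j ?cs ?acc)"
    using all XYr by blast
  then show ?case by (simp add: m_def)
qed

lemma k_facts:
  fixes n :: nat assumes "n \<ge> 1"
  shows "n \<le> 3 ^ nat \<lceil>log 3 (real n)\<rceil>" and "n \<ge> 2 \<Longrightarrow> nat \<lceil>log 3 (real n)\<rceil> \<ge> 1"
    and "n = 1 \<Longrightarrow> nat \<lceil>log 3 (real n)\<rceil> = 0"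
proof -
  have "real n \<le> (3::real) ^ nat \<lceil>log 3 (real n)\<rceil>" by (rule power_of_nat_log_ge) simp
  then show "n \<le> 3 ^ nat \<lceil>log 3 (real n)\<rceil>" by (metis of_nat_le_iff of_nat_numeral of_nat_power)
next
  assume "n \<ge> 2"
  then have "log 3 (real n) > 0" by simp
  then show "nat \<lceil>log 3 (real n)\<rceil> \<ge> 1" by linarith
next
  assume "n = 1" then show "nat \<lceil>log 3 (real n)\<rceil> = 0" by simp
qed

theorem mainTheorem9:
  fixes n :: nat and w :: "bool list"
  assumes "n \<ge> 1" and "length w = n"
  shows "\<exists>phi. sentence phi
    \<and> prenex_with_prefix (concat (replicate (nat \<lceil>log 3 (real n)\<rceil>) [True, True, False])) phi
    \<and> nquant phi = 3 * nat \<lceil>log 3 (real n)\<rceil>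
    \<and> models w phi
    \<and> (\<forall>w'. length w' = n \<and> w' \<noteq> w \<longrightarrow> \<not> models w' phi)"
proof -
  define k where "k = nat \<lceil>log 3 (real n)\<rceil>"
  define acc0 where "acc0 = And (lit (w!0) Min) (lit (w!(n-1)) Max)"
  define u0 where "u0 = take (n-2) (drop 1 w)"
  define cs0 where "cs0 = (if n \<ge> 2 then [Cse FTrue Min Max u0] else [])"
  define phi where "phi = F k cs0 acc0"
  have kf: "n \<le> 3^k" "n \<ge> 2 \<Longrightarrow> k \<ge> 1" using k_facts[OF assms(1)] by (auto simp: k_def)
  have lu0: "length u0 = n - 2" using assms by (simp add: u0_def)
  obtain qs mt where pq: "qfree mt" "map fst qs = concat (replicate k [True,True,False])" "phi = add_prefix qs mt"
    using F_prenex[of acc0 cs0 k] by (auto simp: phi_def acc0_def cs0_def)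
  have sent: "sentence phi" using F_free[of k cs0 acc0] by (auto simp: sentence_def phi_def acc0_def cs0_def)
  have pre: "prenex_with_prefix (concat (replicate k [True, True, False])) phi"
    using pq unfolding prenex_with_prefix_def by blast
  have nq: "nquant phi = 3 * k"
  proof -
    have "length qs = length (map fst qs)" by simp
    also have "\<dots> = 3 * k" using pq(2) by (simp add: length_concat sum_list_replicate)
    finally show ?thesis using nquant_prefix[OF pq(1)] pq(3) by simp
  qed
  have mw: "models w phi"
    unfolding models_def phi_def
  proof (rule F_complete)
    show "\<forall>x. (\<lambda>_. 1) x \<in> {1..length w}" using assms by auto
    show "1 \<le> length w" using assms by simp
    show "\<forall>c\<in>set cs0. \<forall>x\<in>cvars c. 3 * k \<le> x" by (simp add: cs0_def)
    show "\<forall>x\<in>free acc0. 3 * k \<le> x" by (simp add: acc0_def)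
    show "holds w (\<lambda>_. 1) acc0" using assms by (auto simp: acc0_def)
    show "\<forall>c\<in>set cs0. ok w (\<lambda>_. 1) c \<and> length (cu c) < 3 ^ k \<and> (cu c = [] \<longrightarrow> 0 < k)"
      using assms kf lu0 by (auto simp: cs0_def match_def u0_def)
    show "\<forall>c\<in>set cs0. \<forall>c'\<in>set cs0. holds w (\<lambda>_. 1) (guard c) \<longrightarrow> holds w (\<lambda>_. 1) (guard c') \<longrightarrow> c = c'"
      by (simp add: cs0_def)
  qed
  have uniq: "\<not> models w' phi" if w': "length w' = n" "w' \<noteq> w" for w'
  proof
    assume "models w' phi"
    then have h: "holds w' (\<lambda>_. 1) acc0 \<and> (\<forall>c\<in>set cs0. ok w' (\<lambda>_. 1) c)"
      unfolding models_def phi_def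
      by (intro F_sound) (use assms w' in \<open>auto simp: cs0_def acc0_def\<close>)
    have e0: "w'!0 = w!0" "w'!(n-1) = w!(n-1)" using h assms w' by (auto simp: acc0_def)
    have emid: "w'!i = w!i" if "1 \<le> i" "i < n - 1" for i
    proof -
      have n2: "n \<ge> 2" using that by simp
      then have "match w' 1 n u0" using h w'(1) by (simp add: cs0_def)
      then have "\<forall>i<length u0. w'!(1+i) = u0!i" unfolding match_def by blast
      moreover have "i - 1 < length u0" using lu0 that by simp
      ultimately have "w'!(1+(i-1)) = u0!(i-1)" by blast
      then show ?thesis using that assms by (simp add: u0_def)
    qed
    have "w' = w"
    proof (rule nth_equalityI)
      show "length w' = length w" using assms w' by simp
      fix i assume "i < length w'"
      then show "w'!i = w!i" using e0 emid[of i] w'(1)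
        by (cases "i = 0"; cases "i = n - 1") auto
    qed
    then show False using w' by simp
  qed
  show ?thesis using sent pre nq mw uniq unfolding k_def by blast
qed

end
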